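(* Let $(c_n)_{n\in\mathbb{N}}$ be a sequence of natural numbers and $x=(x_i)_{i\in\mathbb{N}}$ a sequence of real numbers. Let $(\epsilon^1_i)_{i\in\mathbb{N}}$ be i.i.d. uniform on $[-1/2,1/2]$ and, for $\beta_1\in\mathbb{R}$, let $Y^1_i:=\beta_1x_i+\epsilon^1_i$. Suppose one observes $(x_i,\tilde Y_i)_{i\le n}$, where $\tilde Y_1,\dots,\tilde Y_n$ are obtained from $Y^1_1,\dots,Y^1_n$ by (adversarially) perturbing $c_n$ of the values. If there exist $c,o\in(0,1)$ and $\bar n\in\mathbb{N}$ such that for all $n\ge\bar n$ \[ p_n:=\sum_{i=1}^n\min\{1,c|x_i|\}<c_n(1-o), \] then there does not exist a consistent estimator for $\beta_1$ (i.e. no sequence of estimators based on $(x_i,\tilde Y_i)_{i\le n}$ converges in probability to $\beta_1$ for every value of the parameter and every such adversarial perturbation). *)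

theory Defs
  imports "HOL-Probability.Probability"
begin

abbreviation data_space :: "nat \<Rightarrow> (nat \<Rightarrow> real) measure" where
  "data_space n \<equiv> PiM {1..n} (\<lambda>_. borel)"

end

theory Submission
  imports Defs
begin

definition wr :: "real \<Rightarrow> real" where "wr t = t - of_int \<lfloor>t + 1/2\<rfloor>"

lemma wr_meas[measurable]: "wr \<in> borel_measurable borel"
  unfolding wr_def by measurable

lemma lborel_shift:
  fixes S :: "real set" assumes "S \<in> sets borel"
  shows "emeasure lborel ((\<lambda>t. t + a) -` S) = emeasure lborel S"
proof -
  have "emeasure lborel S = emeasure (distr lborel borel ((+) a)) S"
    by (simp add: lborel_distr_plus)
  also have "\<dots> = emeasure lborel (((+) a) -` S)"
    using assms by (simp add: emeasure_distr)
  moreover have "(\<lambda>t. t + a) = (+) a" by (auto simp: fun_eq_iff add.commute)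
  ultimately show ?thesis by simp
qed

lemma lborel_point:
  fixes S S' :: "real set"
  assumes "S \<in> sets borel" "S' \<in> sets borel" "S \<union> {p} = S' \<union> {p}"
  shows "emeasure lborel S = emeasure lborel S'"
proof -
  have n: "{p} \<in> null_sets lborel" by (rule finite_imp_null_set_lborel) simp
  have "emeasure lborel S = emeasure lborel (S \<union> {p})"
    using emeasure_Un_null_set[OF _ n, of S] assms by simp
  also have "\<dots> = emeasure lborel (S' \<union> {p})" using assms by simp
  also have "\<dots> = emeasure lborel S'"
    using emeasure_Un_null_set[OF _ n, of S'] assms by simp
  finally show ?thesis .
qed

lemma wrap_uniform:
  "distr (uniform_measure lborel {-1/2..1/2::real}) borel (\<lambda>t. wr (d + t))
     = uniform_measure lborel {-1/2..1/2::real}"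
proof (rule measure_eqI)
  show "sets (distr (uniform_measure lborel {-1/2..1/2::real}) borel (\<lambda>t. wr (d + t))) =
    sets (uniform_measure lborel {-1/2..1/2::real})" by simp
next
  fix B assume "B \<in> sets (distr (uniform_measure lborel {-1/2..1/2::real}) borel (\<lambda>t. wr (d + t)))"
  then have B[measurable]: "B \<in> sets borel" by simp
  define g where "g = (\<lambda>t. wr (d + t))"
  have gm[measurable]: "g \<in> borel_measurable borel" unfolding g_def by measurable
  define a where "a = frac d"
  have a0: "0 \<le> a" and a1: "a < 1" unfolding a_def by (auto simp: frac_lt_1)
  have da: "d = of_int \<lfloor>d\<rfloor> + a" unfolding a_def frac_def by simp
  have g1: "g t = t + a" if "-1/2 < t" "t < 1/2 - a" for t
  proof -
    have e: "d + t + 1/2 = of_int \<lfloor>d\<rfloor> + (a + t + 1/2)" using da by simp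
    have "\<lfloor>d + t + 1/2\<rfloor> = \<lfloor>d\<rfloor>"
      unfolding e using that a0 by (simp add: floor_eq_iff)
    then show ?thesis unfolding g_def wr_def using da by (simp add: add.assoc)
  qed
  have g2: "g t = t + (a - 1)" if "1/2 - a \<le> t" "t \<le> 1/2" for t
  proof -
    have e: "d + t + 1/2 = of_int \<lfloor>d\<rfloor> + (a + t + 1/2)" using da by simp
    have "\<lfloor>d + t + 1/2\<rfloor> = \<lfloor>d\<rfloor> + 1"
      unfolding e using that a1 by (simp add: floor_eq_iff)
    then show ?thesis unfolding g_def wr_def using da by (simp add: add.assoc)
  qed
  define X where "X = {-1/2..1/2} \<inter> g -` B"
  define P1 where "P1 = {-1/2<..<1/2-a} \<inter> (\<lambda>t. t + a) -` ({a-1/2<..<1/2} \<inter> B)"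
  define P2 where "P2 = {1/2-a..1/2} \<inter> (\<lambda>t. t + (a-1)) -` ({-1/2..a-1/2} \<inter> B)"
  have P1': "P1 = (\<lambda>t. t + a) -` ({a-1/2<..<1/2} \<inter> B)" unfolding P1_def by auto
  have P2': "P2 = (\<lambda>t. t + (a-1)) -` ({-1/2..a-1/2} \<inter> B)" unfolding P2_def by auto
  have XP: "X \<union> {-1/2} = (P1 \<union> P2) \<union> {-1/2}"
  proof -
    have "t \<in> X \<longleftrightarrow> t \<in> P1 \<union> P2" if "t \<noteq> -1/2" for t
    proof (cases "t < 1/2 - a")
      case True then show ?thesis using that g1[of t] a0 unfolding X_def P1_def P2_def by auto
    next
      case False then show ?thesis using that g2[of t] a0 a1 unfolding X_def P1_def P2_def by auto
    qed
    then show ?thesis by blast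
  qed
  have [measurable]: "X \<in> sets borel" "P1 \<in> sets borel" "P2 \<in> sets borel"
    unfolding X_def P1_def P2_def by measurable
  have "emeasure lborel X = emeasure lborel (P1 \<union> P2)"
    by (rule lborel_point[OF _ _ XP]) auto
  also have "\<dots> = emeasure lborel P1 + emeasure lborel P2"
    by (rule plus_emeasure[symmetric]) (auto simp: P1_def P2_def)
  also have "\<dots> = emeasure lborel ({a-1/2<..<1/2} \<inter> B) + emeasure lborel ({-1/2..a-1/2} \<inter> B)"
    unfolding P1' P2' by (simp only: lborel_shift[OF sets.Int[OF _ B]] atLeastAtMost_borel greaterThanLessThan_borel)
  also have "\<dots> = emeasure lborel ({a-1/2<..<1/2} \<inter> B \<union> {-1/2..a-1/2} \<inter> B)"
    by (rule plus_emeasure) auto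
  also have "\<dots> = emeasure lborel ({-1/2..1/2} \<inter> B)"
    by (rule lborel_point[where p="1/2"]) (use a0 a1 in auto)
  finally have eq: "emeasure lborel X = emeasure lborel ({-1/2..1/2} \<inter> B)" .
  have "emeasure (distr (uniform_measure lborel {-1/2..1/2::real}) borel g) B
     = emeasure (uniform_measure lborel {-1/2..1/2::real}) (g -` B \<inter> space (uniform_measure lborel {-1/2..1/2::real}))"
    by (rule emeasure_distr) auto
  also have "\<dots> = emeasure lborel X" unfolding X_def
    using measurable_sets_borel[OF gm B]
    by (subst emeasure_uniform_measure) (auto simp: Int_commute divide_ennreal_def)
  also have "\<dots> = emeasure (uniform_measure lborel {-1/2..1/2::real}) B"
    unfolding eq by (subst emeasure_uniform_measure) (auto simp: divide_ennreal_def)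
  finally show "emeasure (distr (uniform_measure lborel {-1/2..1/2::real}) borel (\<lambda>t. wr (d + t))) B =
         emeasure (uniform_measure lborel {-1/2..1/2::real}) B" unfolding g_def .
qed

lemma change_prob:
  assumes "prob_space M" and X[measurable]: "X \<in> borel_measurable M"
    and dX: "distr M borel X = uniform_measure lborel {-1/2..1/2::real}"
  shows "measure M {\<omega>\<in>space M. wr (d + X \<omega>) \<noteq> d + X \<omega>} \<le> min 1 (2*\<bar>d\<bar>)"
proof -
  define S where "S = {t. wr (d + t) \<noteq> d + t}"
  have S[measurable]: "S \<in> sets borel" unfolding S_def by measurable
  have "measure M {\<omega>\<in>space M. wr (d + X \<omega>) \<noteq> d + X \<omega>} = measure M (X -` S \<inter> space M)"
    unfolding S_def by (rule arg_cong[where f="measure M"]) auto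
  also have "\<dots> = measure (distr M borel X) S" by (rule measure_distr[symmetric]) auto
  also have "\<dots> = measure (uniform_measure lborel {-1/2..1/2::real}) S" using dX by simp
  finally have eq: "measure M {\<omega>\<in>space M. wr (d + X \<omega>) \<noteq> d + X \<omega>} = measure (uniform_measure lborel {-1/2..1/2::real}) S" .
  have le1: "measure M {\<omega>\<in>space M. wr (d + X \<omega>) \<noteq> d + X \<omega>} \<le> 1"
    using prob_space.prob_le_1[OF assms(1)] by simp
  have sub: "{-1/2..1/2} \<inter> S \<subseteq> {-1/2..-1/2+\<bar>d\<bar>} \<union> {1/2-\<bar>d\<bar>..1/2}"
  proof
    fix t assume t: "t \<in> {-1/2..1/2} \<inter> S"
    then have "\<lfloor>d + t + 1/2\<rfloor> \<noteq> 0" unfolding S_def wr_def by auto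
    then have "d + t + 1/2 < 0 \<or> d + t + 1/2 \<ge> 1" by (auto simp: floor_eq_iff)
    then show "t \<in> {-1/2..-1/2+\<bar>d\<bar>} \<union> {1/2-\<bar>d\<bar>..1/2}" using t by auto
  qed
  have "emeasure (uniform_measure lborel {-1/2..1/2::real}) S = emeasure lborel ({-1/2..1/2} \<inter> S)"
    by (subst emeasure_uniform_measure) (auto simp: divide_ennreal_def)
  also have "\<dots> \<le> emeasure lborel ({-1/2..-1/2+\<bar>d\<bar>} \<union> {1/2-\<bar>d\<bar>..1/2::real})"
    by (rule emeasure_mono[OF sub]) auto
  also have "\<dots> \<le> emeasure lborel {-1/2..-1/2+\<bar>d\<bar>::real} + emeasure lborel {1/2-\<bar>d\<bar>..1/2::real}"
    by (rule emeasure_subadditive) auto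
  also have "\<dots> = ennreal (2*\<bar>d\<bar>)" by (simp add: ennreal_plus[symmetric] del: ennreal_plus)
  finally have "measure (uniform_measure lborel {-1/2..1/2::real}) S \<le> 2*\<bar>d\<bar>"
    unfolding measure_def by (intro enn2real_leI) auto
  with le1 eq show ?thesis by simp
qed

theorem theoremE1:
  fixes cn :: "nat \<Rightarrow> nat" and x :: "nat \<Rightarrow> real"
    and M :: "'a measure" and eps :: "nat \<Rightarrow> 'a \<Rightarrow> real"
    and c ov :: real and nbar :: nat
  assumes "prob_space M"
    and "prob_space.indep_vars M (\<lambda>_. borel) eps UNIV"
    and "\<And>i. distr M borel (eps i) = uniform_measure lborel {-1/2..1/2}"
    and "0 < c" "c < 1" "0 < ov" "ov < 1"
    and "\<forall>n\<ge>nbar. (\<Sum>i=1..n. min 1 (c * \<bar>x i\<bar>)) < real (cn n) * (1 - ov)"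
  shows "\<not> (\<exists>T :: nat \<Rightarrow> (nat \<Rightarrow> real) \<Rightarrow> real.
            (\<forall>n. T n \<in> borel_measurable (data_space n)) \<and>
            (\<forall>\<beta>::real. \<forall>A :: nat \<Rightarrow> (nat \<Rightarrow> real) \<Rightarrow> (nat \<Rightarrow> real).
               (\<forall>n. A n \<in> data_space n \<rightarrow>\<^sub>M data_space n \<and>
                    (\<forall>y \<in> space (data_space n). card {i \<in> {1..n}. A n y i \<noteq> y i} \<le> cn n))
               \<longrightarrow> (\<forall>e>0. (\<lambda>n. measure M {\<omega> \<in> space M.
                        \<bar>T n (A n (\<lambda>i\<in>{1..n}. \<beta> * x i + eps i \<omega>)) - \<beta>\<bar> > e})
                      \<longlonglongrightarrow> 0)))"
proof
  assume "\<exists>T :: nat \<Rightarrow> (nat \<Rightarrow> real) \<Rightarrow> real.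
            (\<forall>n. T n \<in> borel_measurable (data_space n)) \<and>
            (\<forall>\<beta>::real. \<forall>A :: nat \<Rightarrow> (nat \<Rightarrow> real) \<Rightarrow> (nat \<Rightarrow> real).
               (\<forall>n. A n \<in> data_space n \<rightarrow>\<^sub>M data_space n \<and>
                    (\<forall>y \<in> space (data_space n). card {i \<in> {1..n}. A n y i \<noteq> y i} \<le> cn n))
               \<longrightarrow> (\<forall>e>0. (\<lambda>n. measure M {\<omega> \<in> space M.
                        \<bar>T n (A n (\<lambda>i\<in>{1..n}. \<beta> * x i + eps i \<omega>)) - \<beta>\<bar> > e})
                      \<longlonglongrightarrow> 0))"
  then obtain T :: "nat \<Rightarrow> (nat \<Rightarrow> real) \<Rightarrow> real" where
    Tm[measurable]: "\<And>n. T n \<in> borel_measurable (data_space n)" and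
    cons: "\<forall>\<beta>::real. \<forall>A :: nat \<Rightarrow> (nat \<Rightarrow> real) \<Rightarrow> (nat \<Rightarrow> real).
               (\<forall>n. A n \<in> data_space n \<rightarrow>\<^sub>M data_space n \<and>
                    (\<forall>y \<in> space (data_space n). card {i \<in> {1..n}. A n y i \<noteq> y i} \<le> cn n))
               \<longrightarrow> (\<forall>e>0. (\<lambda>n. measure M {\<omega> \<in> space M.
                        \<bar>T n (A n (\<lambda>i\<in>{1..n}. \<beta> * x i + eps i \<omega>)) - \<beta>\<bar> > e})
                      \<longlonglongrightarrow> 0)" by blast
  interpret P: prob_space M by fact
  have ind: "P.indep_vars (\<lambda>_. borel) eps UNIV" using assms(2) by simp
  have epsm[measurable]: "\<And>i. eps i \<in> borel_measurable M" using ind unfolding P.indep_vars_def by auto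
  define \<delta> where "\<delta> = c/2"
  define e where "e = \<delta>/4"
  have \<delta>0: "0 < \<delta>" and e0: "0 < e" using assms(4) by (auto simp: \<delta>_def e_def)
  define cnt where "cnt n y = (\<Sum>j\<in>{1..n}. if wr (y j) \<noteq> y j then 1 else 0::real)"
    for n and y :: "nat \<Rightarrow> real"
  define Adv where "Adv n y = (\<lambda>i\<in>{1..n}. if cnt n y \<le> real (cn n) then wr (y i) else y i)"
    for n and y :: "nat \<Rightarrow> real"
  have cnt_meas[measurable]: "cnt n \<in> borel_measurable (data_space n)" for n
    unfolding cnt_def by measurable
  have Adv_meas[measurable]: "Adv n \<in> data_space n \<rightarrow>\<^sub>M data_space n" for n
    unfolding Adv_def by measurable
  have cnt_card: "cnt n y = real (card {j\<in>{1..n}. wr (y j) \<noteq> y j})" for n y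
    unfolding cnt_def by (simp add: sum.inter_filter[symmetric])
  have Adv_card: "card {i\<in>{1..n}. Adv n y i \<noteq> y i} \<le> cn n" for n y
  proof (cases "cnt n y \<le> real (cn n)")
    case True
    then have "{i\<in>{1..n}. Adv n y i \<noteq> y i} = {j\<in>{1..n}. wr (y j) \<noteq> y j}"
      unfolding Adv_def by auto
    then show ?thesis using True cnt_card by simp
  next
    case False
    then have "{i\<in>{1..n}. Adv n y i \<noteq> y i} = {}" unfolding Adv_def by auto
    then show ?thesis by (metis card.empty zero_le)
  qed
  define Z where "Z n \<omega> = (\<lambda>i\<in>{1..n}. eps i \<omega>)" for n \<omega>
  define V where "V n \<omega> = (\<lambda>i\<in>{1..n}. wr (\<delta> * x i + eps i \<omega>))" for n \<omega>
  define Yd where "Yd n \<omega> = (\<lambda>i\<in>{1..n}. \<delta> * x i + eps i \<omega>)" for n \<omega>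
  have Zm[measurable]: "Z n \<in> M \<rightarrow>\<^sub>M data_space n" for n unfolding Z_def by measurable
  have Vm[measurable]: "V n \<in> M \<rightarrow>\<^sub>M data_space n" for n unfolding V_def by measurable
  have Ydm[measurable]: "Yd n \<in> M \<rightarrow>\<^sub>M data_space n" for n unfolding Yd_def by measurable
  have lim0: "(\<lambda>n. measure M {\<omega>\<in>space M. e < \<bar>T n (Z n \<omega>)\<bar>}) \<longlonglongrightarrow> 0"
  proof -
    have "(\<forall>n. (\<lambda>y. y) \<in> data_space n \<rightarrow>\<^sub>M data_space n \<and>
                    (\<forall>y \<in> space (data_space n). card {i \<in> {1..n}. y i \<noteq> y i} \<le> cn n))" by simp
    with spec[OF spec[OF cons, of 0], of "\<lambda>n y. y"] have "\<forall>e>0. (\<lambda>n. measure M {\<omega> \<in> space M.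
                        \<bar>T n ((\<lambda>i\<in>{1..n}. 0 * x i + eps i \<omega>)) - 0\<bar> > e}) \<longlonglongrightarrow> 0" by simp
    with e0 show ?thesis unfolding Z_def by simp
  qed
  have lim1: "(\<lambda>n. measure M {\<omega>\<in>space M. e < \<bar>T n (Adv n (Yd n \<omega>)) - \<delta>\<bar>}) \<longlonglongrightarrow> 0"
  proof -
    have "(\<forall>n. Adv n \<in> data_space n \<rightarrow>\<^sub>M data_space n \<and>
                    (\<forall>y \<in> space (data_space n). card {i \<in> {1..n}. Adv n y i \<noteq> y i} \<le> cn n))"
      using Adv_meas Adv_card by simp
    with spec[OF spec[OF cons, of \<delta>], of Adv] have "\<forall>e>0. (\<lambda>n. measure M {\<omega> \<in> space M.
                        \<bar>T n (Adv n (\<lambda>i\<in>{1..n}. \<delta> * x i + eps i \<omega>)) - \<delta>\<bar> > e}) \<longlonglongrightarrow> 0" by blast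
    with e0 show ?thesis unfolding Yd_def by simp
  qed
  have dist: "distr M (data_space n) (V n) = distr M (data_space n) (Z n)" if n1: "1 \<le> n" for n
  proof -
    have ne: "{1..n} \<noteq> {}" using n1 by simp
    have indn: "P.indep_vars (\<lambda>_. borel) eps {1..n}" by (rule P.indep_vars_subset[OF ind]) auto
    have indV: "P.indep_vars (\<lambda>_. borel) (\<lambda>i \<omega>. wr (\<delta> * x i + eps i \<omega>)) {1..n}"
      by (rule P.indep_vars_compose2[OF indn]) measurable
    have dZ: "distr M (data_space n) (Z n) = (\<Pi>\<^sub>M i\<in>{1..n}. distr M borel (eps i))"
      using P.indep_vars_iff_distr_eq_PiM'[OF ne, where M'="\<lambda>_. borel" and X=eps] indn unfolding Z_def by simp
    have dV: "distr M (data_space n) (V n) = (\<Pi>\<^sub>M i\<in>{1..n}. distr M borel (\<lambda>\<omega>. wr (\<delta> * x i + eps i \<omega>)))"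
      using P.indep_vars_iff_distr_eq_PiM'[OF ne, where M'="\<lambda>_. borel" and X="\<lambda>i \<omega>. wr (\<delta> * x i + eps i \<omega>)"] indV
      unfolding V_def by simp
    have "distr M borel (\<lambda>\<omega>. wr (\<delta> * x i + eps i \<omega>)) = distr M borel (eps i)" for i
    proof -
      have "distr M borel (\<lambda>\<omega>. wr (\<delta> * x i + eps i \<omega>)) = distr (distr M borel (eps i)) borel (\<lambda>t. wr (\<delta> * x i + t))"
        by (subst distr_distr) (auto simp: comp_def)
      also have "\<dots> = distr M borel (eps i)" unfolding assms(3) by (rule wrap_uniform)
      finally show ?thesis .
    qed
    then show ?thesis unfolding dZ dV by simp
  qed
  have eqV: "measure M {\<omega>\<in>space M. e < \<bar>T n (V n \<omega>)\<bar>} = measure M {\<omega>\<in>space M. e < \<bar>T n (Z n \<omega>)\<bar>}"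
    if n1: "1 \<le> n" for n
  proof -
    define S where "S = {u\<in>space (data_space n). e < \<bar>T n u\<bar>}"
    have S[measurable]: "S \<in> sets (data_space n)" unfolding S_def by measurable
    have "measure M {\<omega>\<in>space M. e < \<bar>T n (V n \<omega>)\<bar>} = measure M (V n -` S \<inter> space M)"
      unfolding S_def using measurable_space[OF Vm] by (intro arg_cong[where f="measure M"]) auto
    also have "\<dots> = measure (distr M (data_space n) (V n)) S" by (rule measure_distr[symmetric, OF Vm S])
    also have "\<dots> = measure (distr M (data_space n) (Z n)) S" using dist[OF n1] by simp
    also have "\<dots> = measure M (Z n -` S \<inter> space M)" by (rule measure_distr[OF Zm S])
    also have "\<dots> = measure M {\<omega>\<in>space M. e < \<bar>T n (Z n \<omega>)\<bar>}"
      unfolding S_def using measurable_space[OF Zm] by (intro arg_cong[where f="measure M"]) auto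
    finally show ?thesis .
  qed
  define G where "G n = {\<omega>\<in>space M. cnt n (Yd n \<omega>) \<le> real (cn n)}" for n
  have Gm[measurable]: "G n \<in> sets M" for n unfolding G_def by measurable
  have aux: "\<delta>/4 < \<bar>t\<bar> \<or> \<delta>/4 < \<bar>t - \<delta>\<bar>" for t :: real using \<delta>0 by arith
  have Gle: "measure M (G n) \<le> measure M {\<omega>\<in>space M. e < \<bar>T n (V n \<omega>)\<bar>}
        + measure M {\<omega>\<in>space M. e < \<bar>T n (Adv n (Yd n \<omega>)) - \<delta>\<bar>}" for n
  proof -
    have "G n \<subseteq> {\<omega>\<in>space M. e < \<bar>T n (V n \<omega>)\<bar>} \<union> {\<omega>\<in>space M. e < \<bar>T n (Adv n (Yd n \<omega>)) - \<delta>\<bar>}"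
    proof
      fix \<omega> assume w: "\<omega> \<in> G n"
      then have "Adv n (Yd n \<omega>) = V n \<omega>" unfolding G_def Adv_def V_def Yd_def
        by (auto simp: fun_eq_iff)
      moreover have "e < \<bar>T n (V n \<omega>)\<bar> \<or> e < \<bar>T n (V n \<omega>) - \<delta>\<bar>" using aux unfolding e_def by blast
      ultimately show "\<omega> \<in> {\<omega>\<in>space M. e < \<bar>T n (V n \<omega>)\<bar>} \<union> {\<omega>\<in>space M. e < \<bar>T n (Adv n (Yd n \<omega>)) - \<delta>\<bar>}"
        using w unfolding G_def by auto
    qed
    then have "measure M (G n) \<le> measure M ({\<omega>\<in>space M. e < \<bar>T n (V n \<omega>)\<bar>} \<union> {\<omega>\<in>space M. e < \<bar>T n (Adv n (Yd n \<omega>)) - \<delta>\<bar>})"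
      by (rule P.finite_measure_mono) measurable
    also have "\<dots> \<le> measure M {\<omega>\<in>space M. e < \<bar>T n (V n \<omega>)\<bar>}
        + measure M {\<omega>\<in>space M. e < \<bar>T n (Adv n (Yd n \<omega>)) - \<delta>\<bar>}" by (rule measure_Un_le) measurable
    finally show ?thesis .
  qed
  have Gbig: "ov < measure M (G n)" if nb: "nbar \<le> n" for n
  proof -
    define Ch where "Ch j = {\<omega>\<in>space M. wr (\<delta> * x j + eps j \<omega>) \<noteq> \<delta> * x j + eps j \<omega>}" for j
    have Chm[measurable]: "Ch j \<in> sets M" for j unfolding Ch_def by measurable
    define C where "C \<omega> = (\<Sum>j\<in>{1..n}. indicator (Ch j) \<omega> :: real)" for \<omega>
    have Cm[measurable]: "C \<in> borel_measurable M" unfolding C_def by measurable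
    have Ceq: "C \<omega> = cnt n (Yd n \<omega>)" if "\<omega> \<in> space M" for \<omega>
      unfolding C_def cnt_def Yd_def Ch_def using that by (intro sum.cong) (auto simp: indicator_def)
    have psum: "(\<Sum>i=1..n. min 1 (c * \<bar>x i\<bar>)) < real (cn n) * (1 - ov)" using assms(8) nb by auto
    have p0: "0 \<le> (\<Sum>i=1..n. min 1 (c * \<bar>x i\<bar>))" using assms(4) by (intro sum_nonneg) auto
    have cn0: "0 < real (cn n)" using psum p0 assms(7)
      by (cases "cn n = 0") auto
    have C0: "0 \<le> C \<omega>" for \<omega> unfolding C_def by (intro sum_nonneg) auto
    have Cb: "\<bar>C \<omega>\<bar> \<le> real n" for \<omega>
    proof -
      have "C \<omega> \<le> (\<Sum>j\<in>{1..n}. 1)" unfolding C_def by (intro sum_mono) (auto simp: indicator_def)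
      then show ?thesis using C0[of \<omega>] by simp
    qed
    have intC: "integral\<^sup>L M C = (\<Sum>j\<in>{1..n}. measure M (Ch j))"
    proof -
      have "integral\<^sup>L M C = (\<Sum>j\<in>{1..n}. integral\<^sup>L M (indicator (Ch j) :: 'a \<Rightarrow> real))"
        unfolding C_def by (rule Bochner_Integration.integral_sum) (auto simp: less_top[symmetric])
      also have "\<dots> = (\<Sum>j\<in>{1..n}. measure M (Ch j))"
        by (intro sum.cong refl) (simp add: Int_absorb2 Ch_def)
      finally show ?thesis .
    qed
    have "(\<Sum>j\<in>{1..n}. measure M (Ch j)) \<le> (\<Sum>j\<in>{1..n}. min 1 (c * \<bar>x j\<bar>))"
    proof (intro sum_mono)
      fix j
      have "measure M (Ch j) \<le> min 1 (2 * \<bar>\<delta> * x j\<bar>)"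
        unfolding Ch_def by (rule change_prob[OF assms(1) epsm assms(3)])
      also have "2 * \<bar>\<delta> * x j\<bar> = c * \<bar>x j\<bar>" using assms(4) by (simp add: \<delta>_def abs_mult)
      finally show "measure M (Ch j) \<le> min 1 (c * \<bar>x j\<bar>)" .
    qed
    with intC psum have intlt: "integral\<^sup>L M C < real (cn n) * (1 - ov)" by simp
    have "measure M {\<omega>\<in>space M. real (cn n) \<le> C \<omega>} \<le> integral\<^sup>L M C / real (cn n)"
      by (rule integral_Markov_inequality_measure[where A="space M"])
         (auto intro!: P.integrable_const_bound[where B="real n"] AE_I2 Cb C0 cn0 simp: cn0[simplified])
    also have "\<dots> < 1 - ov" using intlt cn0 by (simp add: divide_less_eq mult.commute)
    finally have mk: "measure M {\<omega>\<in>space M. real (cn n) \<le> C \<omega>} < 1 - ov" .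
    have "space M - {\<omega>\<in>space M. real (cn n) \<le> C \<omega>} \<subseteq> G n" unfolding G_def using Ceq by auto
    then have "measure M (space M - {\<omega>\<in>space M. real (cn n) \<le> C \<omega>}) \<le> measure M (G n)"
      by (intro P.finite_measure_mono) auto
    moreover have "measure M (space M - {\<omega>\<in>space M. real (cn n) \<le> C \<omega>}) = 1 - measure M {\<omega>\<in>space M. real (cn n) \<le> C \<omega>}"
      by (rule P.prob_compl) measurable
    ultimately show ?thesis using mk by simp
  qed
  have "(\<lambda>n. measure M {\<omega>\<in>space M. e < \<bar>T n (V n \<omega>)\<bar>}) \<longlonglongrightarrow> 0"
  proof (rule Lim_transform_eventually[OF lim0])
    show "\<forall>\<^sub>F n in sequentially. measure M {\<omega>\<in>space M. e < \<bar>T n (Z n \<omega>)\<bar>} = measure M {\<omega>\<in>space M. e < \<bar>T n (V n \<omega>)\<bar>}"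
      using eventually_ge_at_top[of 1] by (rule eventually_mono) (simp add: eqV)
  qed
  from tendsto_add[OF this lim1] have "(\<lambda>n. measure M {\<omega>\<in>space M. e < \<bar>T n (V n \<omega>)\<bar>}
        + measure M {\<omega>\<in>space M. e < \<bar>T n (Adv n (Yd n \<omega>)) - \<delta>\<bar>}) \<longlonglongrightarrow> 0" by simp
  from order_tendstoD(2)[OF this assms(6)] obtain N where
    N: "\<And>n. N \<le> n \<Longrightarrow> measure M {\<omega>\<in>space M. e < \<bar>T n (V n \<omega>)\<bar>}
        + measure M {\<omega>\<in>space M. e < \<bar>T n (Adv n (Yd n \<omega>)) - \<delta>\<bar>} < ov"
    unfolding eventually_sequentially by blast
  have "ov < measure M (G (max N nbar))" by (rule Gbig) simp
  moreover note Gle[of "max N nbar"]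
  moreover note N[of "max N nbar"]
  ultimately show False by simp
qed

end
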